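(* Let $(\mathbb S,+,\cdot)$ be an S-Field. Then for every $\alpha\in\mathbb S_0$ with $\alpha\neq0$, $\frac{\alpha}{0}=q_0^*(\alpha)$ exists and is a unique element, and distinct such $\alpha$ give distinct values: if $\alpha,\beta\in\mathbb S_0\setminus\{0\}$ and $\alpha\neq\beta$ then $\frac{\alpha}{0}\neq\frac{\beta}{0}$.
   Context: An S-Structure is a triple $(\mathbb S,+,\cdot)$ where $\mathbb S$ is a set and $+,\cdot$ are binary operations on $\mathbb S$ such that: $(\mathbb S,+)$ is a commutative group with identity $0$ (the inverse of $s$ is written $-s$, and $s-t:=s+(-t)$); $\mathbb S$ is closed under $\cdot$; and there exists $s\in\mathbb S$ with $0\cdot s\neq 0$ or $s\cdot 0\neq 0$. Multiplication binds tighter than addition. The structures considered come with a distinguished element of $\mathbb S$ denoted $1$. It is Commutative if $s\cdot t=t\cdot s$ for all $s,t$. For a Commutative S-Structure and $\alpha\in\mathbb S$, put $\mathbb S_\alpha=\{s\in\mathbb S:0\cdot s=s\cdot 0=\alpha\}$ and $\Lambda=\{\alpha\in\mathbb S:\mathbb S_\alpha\neq\emptyset\}$. Wheel Distributive: $s\cdot(t+r)+(s\cdot 0)=(s\cdot t)+(s\cdot r)$ for all $s,t,r\in\mathbb S$. S-Associative: for all $m,n\in\mathbb S_0$ and $s\in\mathbb S$, $m\cdot(n\cdot s)=(m\cdot n)\cdot s-([(m-1)\cdot(n-1)]\cdot(0\cdot s))$. Base: if $\mathbb S_0\neq\emptyset$ and $\alpha\in\Lambda$, $q\in\mathbb S_\alpha$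 is a Base for $\mathbb S_\alpha$ if $q+\beta\in\mathbb S_\alpha$ for all $\beta\in\mathbb S_0$ and every $s\in\mathbb S_\alpha$ equals $q+\beta$ for some $\beta\in\mathbb S_0$. Coordinated: $\mathbb S_0\neq\emptyset$ and every $\mathbb S_\alpha$ with $\alpha\in\Lambda$ has a Base. Standard Bases: a Coordinated Commutative S-Structure has Standard Bases if there is a specified element $q_0(1)\in\mathbb S_1$ which is a Base for $\mathbb S_1$, and for every $\alpha\in\Lambda$ the element $q_0(\alpha):=\alpha\cdot(q_0(1)+1)-1$ lies in $\mathbb S_\alpha$ and is a Base for $\mathbb S_\alpha$. An Essential S-Structure is an S-Structure that is Commutative, Wheel Distributive, S-Associative, has Standard Bases (in particular is Coordinated), satisfies $0,1\in\mathbb S_0$, and satisfies $\mathbb S_0=\{1\cdot x:x\in\mathbb S_0\}$. A Unity is an element $e\in\Lambda$ with $e\cdot s=s\cdot e=s$ for all $s\in\mathbb S$. Scalar Inverses: the structure has a Unity $e$ and for every $x\in\mathbb S_0$ with $x\neq 0$ there is $x^{-1}\in\mathbb S_0$ with $x\cdot x^{-1}=x^{-1}\cdot x=e$. An S-Ring is an Essential S-Structure with a Unity; an S-Field is an S-Ring with Scalar Inverses. Reversible: for $\alpha\in\Lambda$, $q_0(\alpha)$ is Reversible if there exists $\alpha^*\in\Lambda$ with $q_0(1)=\alpha^*\cdot(q_0(\alpha)+\alpha)-\alpha$; then $q_0^*(\alpha):=q_0(\alpha)$. Division By Zero: in an S-Field, for $\alpha\in\mathbb S_0$ with $\alpha\neq0$,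 $\frac{\alpha}{0}:=q_0^*(\alpha)$. *)

theory Defs
  imports Main
begin

text \<open>For Standard Bases the specified element q0(1) is q01.\<close>

definition ssub :: "('a \<Rightarrow> 'a \<Rightarrow> 'a) \<Rightarrow> ('a \<Rightarrow> 'a) \<Rightarrow> 'a \<Rightarrow> 'a \<Rightarrow> 'a" where
  "ssub add neg s t = add s (neg t)"

definition S_structure ::
  "'a set \<Rightarrow> ('a \<Rightarrow> 'a \<Rightarrow> 'a) \<Rightarrow> ('a \<Rightarrow> 'a) \<Rightarrow> 'a \<Rightarrow> ('a \<Rightarrow> 'a \<Rightarrow> 'a) \<Rightarrow> 'a \<Rightarrow> bool" where
  "S_structure S add neg z mul one \<longleftrightarrow>
     (\<forall>s\<in>S. \<forall>t\<in>S. add s t \<in> S) \<and>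
     (\<forall>s\<in>S. \<forall>t\<in>S. \<forall>r\<in>S. add (add s t) r = add s (add t r)) \<and>
     (\<forall>s\<in>S. \<forall>t\<in>S. add s t = add t s) \<and>
     z \<in> S \<and> (\<forall>s\<in>S. add z s = s) \<and>
     (\<forall>s\<in>S. neg s \<in> S \<and> add s (neg s) = z) \<and>
     (\<forall>s\<in>S. \<forall>t\<in>S. mul s t \<in> S) \<and>
     (\<exists>s\<in>S. mul z s \<noteq> z \<or> mul s z \<noteq> z) \<and>
     one \<in> S"

definition S_commutative :: "'a set \<Rightarrow> ('a \<Rightarrow> 'a \<Rightarrow> 'a) \<Rightarrow> bool" where
  "S_commutative S mul \<longleftrightarrow> (\<forall>s\<in>S. \<forall>t\<in>S. mul s t = mul t s)"

definition S_alpha :: "'a set \<Rightarrow> 'a \<Rightarrow> ('a \<Rightarrow> 'a \<Rightarrow> 'a) \<Rightarrow> 'a \<Rightarrow> 'a set" where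
  "S_alpha S z mul \<alpha> = {s\<in>S. mul z s = \<alpha> \<and> mul s z = \<alpha>}"

definition Lambda :: "'a set \<Rightarrow> 'a \<Rightarrow> ('a \<Rightarrow> 'a \<Rightarrow> 'a) \<Rightarrow> 'a set" where
  "Lambda S z mul = {\<alpha>\<in>S. S_alpha S z mul \<alpha> \<noteq> {}}"

definition wheel_distributive ::
  "'a set \<Rightarrow> ('a \<Rightarrow> 'a \<Rightarrow> 'a) \<Rightarrow> 'a \<Rightarrow> ('a \<Rightarrow> 'a \<Rightarrow> 'a) \<Rightarrow> bool" where
  "wheel_distributive S add z mul \<longleftrightarrow>
     (\<forall>s\<in>S. \<forall>t\<in>S. \<forall>r\<in>S. add (mul s (add t r)) (mul s z) = add (mul s t) (mul s r))"

definition S_associative ::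
  "'a set \<Rightarrow> ('a \<Rightarrow> 'a \<Rightarrow> 'a) \<Rightarrow> ('a \<Rightarrow> 'a) \<Rightarrow> 'a \<Rightarrow> ('a \<Rightarrow> 'a \<Rightarrow> 'a) \<Rightarrow> 'a \<Rightarrow> bool" where
  "S_associative S add neg z mul one \<longleftrightarrow>
     (\<forall>m\<in>S_alpha S z mul z. \<forall>n\<in>S_alpha S z mul z. \<forall>s\<in>S.
        mul m (mul n s) =
        ssub add neg (mul (mul m n) s)
          (mul (mul (ssub add neg m one) (ssub add neg n one)) (mul z s)))"

definition is_base ::
  "'a set \<Rightarrow> ('a \<Rightarrow> 'a \<Rightarrow> 'a) \<Rightarrow> 'a \<Rightarrow> ('a \<Rightarrow> 'a \<Rightarrow> 'a) \<Rightarrow> 'a \<Rightarrow> 'a \<Rightarrow> bool" where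
  "is_base S add z mul \<alpha> q \<longleftrightarrow>
     q \<in> S_alpha S z mul \<alpha> \<and>
     (\<forall>\<beta>\<in>S_alpha S z mul z. add q \<beta> \<in> S_alpha S z mul \<alpha>) \<and>
     (\<forall>s\<in>S_alpha S z mul \<alpha>. \<exists>\<beta>\<in>S_alpha S z mul z. s = add q \<beta>)"

definition coordinated ::
  "'a set \<Rightarrow> ('a \<Rightarrow> 'a \<Rightarrow> 'a) \<Rightarrow> 'a \<Rightarrow> ('a \<Rightarrow> 'a \<Rightarrow> 'a) \<Rightarrow> bool" where
  "coordinated S add z mul \<longleftrightarrow>
     S_alpha S z mul z \<noteq> {} \<and>
     (\<forall>\<alpha>\<in>Lambda S z mul. \<exists>q. is_base S add z mul \<alpha> q)"

definition q0 ::
  "('a \<Rightarrow> 'a \<Rightarrow> 'a) \<Rightarrow> ('a \<Rightarrow> 'a) \<Rightarrow> ('a \<Rightarrow> 'a \<Rightarrow> 'a) \<Rightarrow> 'a \<Rightarrow> 'a \<Rightarrow> 'a \<Rightarrow> 'a" where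
  "q0 add neg mul one q01 \<alpha> = ssub add neg (mul \<alpha> (add q01 one)) one"

definition standard_bases ::
  "'a set \<Rightarrow> ('a \<Rightarrow> 'a \<Rightarrow> 'a) \<Rightarrow> ('a \<Rightarrow> 'a) \<Rightarrow> 'a \<Rightarrow> ('a \<Rightarrow> 'a \<Rightarrow> 'a) \<Rightarrow> 'a \<Rightarrow> 'a \<Rightarrow> bool" where
  "standard_bases S add neg z mul one q01 \<longleftrightarrow>
     coordinated S add z mul \<and>
     q01 \<in> S_alpha S z mul one \<and>
     is_base S add z mul one q01 \<and>
     (\<forall>\<alpha>\<in>Lambda S z mul.
        q0 add neg mul one q01 \<alpha> \<in> S_alpha S z mul \<alpha> \<and>
        is_base S add z mul \<alpha> (q0 add neg mul one q01 \<alpha>))"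

definition essential ::
  "'a set \<Rightarrow> ('a \<Rightarrow> 'a \<Rightarrow> 'a) \<Rightarrow> ('a \<Rightarrow> 'a) \<Rightarrow> 'a \<Rightarrow> ('a \<Rightarrow> 'a \<Rightarrow> 'a) \<Rightarrow> 'a \<Rightarrow> 'a \<Rightarrow> bool" where
  "essential S add neg z mul one q01 \<longleftrightarrow>
     S_structure S add neg z mul one \<and>
     S_commutative S mul \<and>
     wheel_distributive S add z mul \<and>
     S_associative S add neg z mul one \<and>
     standard_bases S add neg z mul one q01 \<and>
     z \<in> S_alpha S z mul z \<and> one \<in> S_alpha S z mul z \<and>
     S_alpha S z mul z = {mul one x | x. x \<in> S_alpha S z mul z}"

definition is_unity :: "'a set \<Rightarrow> 'a \<Rightarrow> ('a \<Rightarrow> 'a \<Rightarrow> 'a) \<Rightarrow> 'a \<Rightarrow> bool" where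
  "is_unity S z mul e \<longleftrightarrow>
     e \<in> Lambda S z mul \<and> (\<forall>s\<in>S. mul e s = s \<and> mul s e = s)"

definition S_ring ::
  "'a set \<Rightarrow> ('a \<Rightarrow> 'a \<Rightarrow> 'a) \<Rightarrow> ('a \<Rightarrow> 'a) \<Rightarrow> 'a \<Rightarrow> ('a \<Rightarrow> 'a \<Rightarrow> 'a) \<Rightarrow> 'a \<Rightarrow> 'a \<Rightarrow> bool" where
  "S_ring S add neg z mul one q01 \<longleftrightarrow>
     essential S add neg z mul one q01 \<and> (\<exists>e. is_unity S z mul e)"

definition S_field ::
  "'a set \<Rightarrow> ('a \<Rightarrow> 'a \<Rightarrow> 'a) \<Rightarrow> ('a \<Rightarrow> 'a) \<Rightarrow> 'a \<Rightarrow> ('a \<Rightarrow> 'a \<Rightarrow> 'a) \<Rightarrow> 'a \<Rightarrow> 'a \<Rightarrow> bool" where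
  "S_field S add neg z mul one q01 \<longleftrightarrow>
     S_ring S add neg z mul one q01 \<and>
     (\<exists>e. is_unity S z mul e \<and>
        (\<forall>x\<in>S_alpha S z mul z. x \<noteq> z \<longrightarrow>
           (\<exists>y\<in>S_alpha S z mul z. mul x y = e \<and> mul y x = e)))"

definition reversible ::
  "'a set \<Rightarrow> ('a \<Rightarrow> 'a \<Rightarrow> 'a) \<Rightarrow> ('a \<Rightarrow> 'a) \<Rightarrow> 'a \<Rightarrow> ('a \<Rightarrow> 'a \<Rightarrow> 'a) \<Rightarrow> 'a \<Rightarrow> 'a \<Rightarrow> 'a \<Rightarrow> bool" where
  "reversible S add neg z mul one q01 \<alpha> \<longleftrightarrow>
     \<alpha> \<in> Lambda S z mul \<and>
     (\<exists>a\<in>Lambda S z mul.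
        q01 = ssub add neg (mul a (add (q0 add neg mul one q01 \<alpha>) \<alpha>)) \<alpha>)"

text \<open>Division by zero alpha/0 := q0*(alpha) = q0(alpha) (when Reversible).\<close>
definition div_zero ::
  "('a \<Rightarrow> 'a \<Rightarrow> 'a) \<Rightarrow> ('a \<Rightarrow> 'a) \<Rightarrow> ('a \<Rightarrow> 'a \<Rightarrow> 'a) \<Rightarrow> 'a \<Rightarrow> 'a \<Rightarrow> 'a \<Rightarrow> 'a" where
  "div_zero add neg mul one q01 \<alpha> = q0 add neg mul one q01 \<alpha>"

end

theory Submission
  imports Defs
begin

locale sfl =
  fixes S :: "'a set" and add mul :: "'a \<Rightarrow> 'a \<Rightarrow> 'a" and neg :: "'a \<Rightarrow> 'a"
    and z one q01 :: 'a
  assumes F: "S_field S add neg z mul one q01"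
begin

lemma ess: "essential S add neg z mul one q01"
  using F unfolding S_field_def S_ring_def by auto

lemma st: "S_structure S add neg z mul one" using ess unfolding essential_def by auto

lemma cl[simp]: "s \<in> S \<Longrightarrow> t \<in> S \<Longrightarrow> add s t \<in> S"
  using st unfolding S_structure_def by auto
lemma assoc: "s \<in> S \<Longrightarrow> t \<in> S \<Longrightarrow> r \<in> S \<Longrightarrow> add (add s t) r = add s (add t r)"
  using st unfolding S_structure_def by auto
lemma comm: "s \<in> S \<Longrightarrow> t \<in> S \<Longrightarrow> add s t = add t s"
  using st unfolding S_structure_def by auto
lemma zS[simp]: "z \<in> S" using st unfolding S_structure_def by auto
lemma oneS[simp]: "one \<in> S" using st unfolding S_structure_def by auto
lemma lid[simp]: "s \<in> S \<Longrightarrow> add z s = s" using st unfolding S_structure_def by auto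
lemma negS[simp]: "s \<in> S \<Longrightarrow> neg s \<in> S" using st unfolding S_structure_def by auto
lemma rinv[simp]: "s \<in> S \<Longrightarrow> add s (neg s) = z" using st unfolding S_structure_def by auto
lemma mulS[simp]: "s \<in> S \<Longrightarrow> t \<in> S \<Longrightarrow> mul s t \<in> S"
  using st unfolding S_structure_def by auto
lemma rid[simp]: "s \<in> S \<Longrightarrow> add s z = s" using comm lid zS by metis
lemma linv[simp]: "s \<in> S \<Longrightarrow> add (neg s) s = z" using comm rinv negS by metis
lemma canc1[simp]: "a \<in> S \<Longrightarrow> b \<in> S \<Longrightarrow> add a (add (neg a) b) = b"
  by (metis assoc negS rinv lid)
lemma canc2[simp]: "a \<in> S \<Longrightarrow> b \<in> S \<Longrightarrow> add (neg a) (add a b) = b"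
  by (metis assoc negS linv lid)
lemma canc3[simp]: "a \<in> S \<Longrightarrow> b \<in> S \<Longrightarrow> add (add b a) (neg a) = b"
  by (metis assoc negS rinv rid)
lemma lcomm: "a \<in> S \<Longrightarrow> b \<in> S \<Longrightarrow> c \<in> S \<Longrightarrow> add a (add b c) = add b (add a c)"
  by (metis assoc comm)
lemma neg_uniq: "a \<in> S \<Longrightarrow> b \<in> S \<Longrightarrow> add a b = z \<Longrightarrow> b = neg a"
  by (metis canc2 rid negS)
lemma neg_add: "a \<in> S \<Longrightarrow> b \<in> S \<Longrightarrow> neg (add a b) = add (neg a) (neg b)"
proof -
  assume a: "a \<in> S" and b: "b \<in> S"
  have "add (add a b) (add (neg a) (neg b)) = z"
    using a b by (metis assoc lcomm negS rinv canc1 cl)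
  thus ?thesis using a b neg_uniq by (metis cl negS)
qed
lemma neg_neg[simp]: "a \<in> S \<Longrightarrow> neg (neg a) = a"
  by (metis neg_uniq negS linv)

lemma mcomm: "s \<in> S \<Longrightarrow> t \<in> S \<Longrightarrow> mul s t = mul t s"
  using ess unfolding essential_def S_commutative_def by auto
lemma wheel: "s \<in> S \<Longrightarrow> t \<in> S \<Longrightarrow> r \<in> S \<Longrightarrow>
   add (mul s (add t r)) (mul s z) = add (mul s t) (mul s r)"
  using ess unfolding essential_def wheel_distributive_def by auto

definition "S0 = S_alpha S z mul z"

lemma S0D: "m \<in> S0 \<Longrightarrow> m \<in> S \<and> mul z m = z \<and> mul m z = z"
  unfolding S0_def S_alpha_def by auto
lemma S0I: "m \<in> S \<Longrightarrow> mul m z = z \<Longrightarrow> m \<in> S0"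
  unfolding S0_def S_alpha_def using mcomm by fastforce

lemma sassoc: "m \<in> S0 \<Longrightarrow> n \<in> S0 \<Longrightarrow> s \<in> S \<Longrightarrow>
  mul m (mul n s) = add (mul (mul m n) s)
     (neg (mul (mul (add m (neg one)) (add n (neg one))) (mul z s)))"
  using ess unfolding essential_def S_associative_def ssub_def S0_def by auto

lemma z0: "z \<in> S0" using ess unfolding essential_def S0_def by auto
lemma one0: "one \<in> S0" using ess unfolding essential_def S0_def by auto

lemma madd: "m \<in> S0 \<Longrightarrow> t \<in> S \<Longrightarrow> r \<in> S \<Longrightarrow> mul m (add t r) = add (mul m t) (mul m r)"
  using wheel[of m t r] S0D[of m] by auto

lemma mneg: "m \<in> S0 \<Longrightarrow> t \<in> S \<Longrightarrow> mul m (neg t) = neg (mul m t)"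
proof -
  assume m: "m \<in> S0" and t: "t \<in> S"
  have "add (mul m t) (mul m (neg t)) = z" using madd[OF m t, of "neg t"] m t S0D by auto
  thus ?thesis using neg_uniq m t S0D by (metis mulS negS)
qed

lemma S0_add: "a \<in> S0 \<Longrightarrow> b \<in> S0 \<Longrightarrow> add a b \<in> S0"
proof -
  assume a: "a \<in> S0" and b: "b \<in> S0"
  have aS: "a \<in> S" and za: "mul z a = z" using S0D[OF a] by auto
  have bS: "b \<in> S" and zb: "mul z b = z" using S0D[OF b] by auto
  have "mul z (add a b) = add (mul z a) (mul z b)" using madd[OF z0 aS bS] .
  hence 1: "mul z (add a b) = z" using za zb by simp
  have "mul (add a b) z = mul z (add a b)" using mcomm aS bS by simp
  with 1 have "mul (add a b) z = z" by simp
  thus ?thesis using S0I aS bS by simp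
qed
lemma neg_z[simp]: "neg z = z" using neg_uniq[of z z] by simp
lemma S0_neg: "a \<in> S0 \<Longrightarrow> neg a \<in> S0"
proof -
  assume a: "a \<in> S0"
  have aS: "a \<in> S" and za: "mul z a = z" using S0D[OF a] by auto
  have "mul z (neg a) = neg (mul z a)" using mneg[OF z0 aS] .
  hence 1: "mul z (neg a) = z" using za by simp
  have "mul (neg a) z = mul z (neg a)" using mcomm aS by simp
  with 1 have "mul (neg a) z = z" by simp
  thus ?thesis using S0I aS by simp
qed

lemma unity: "\<exists>e. is_unity S z mul e \<and>
        (\<forall>x\<in>S_alpha S z mul z. x \<noteq> z \<longrightarrow>
           (\<exists>y\<in>S_alpha S z mul z. mul x y = e \<and> mul y x = e))"
  using F unfolding S_field_def by auto

lemma inv_ex: "x \<in> S0 \<Longrightarrow> x \<noteq> z \<Longrightarrow> \<exists>y\<in>S0. mul x y = one \<and> mul y x = one"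
     and unit: "s \<in> S \<Longrightarrow> mul one s = s \<and> mul s one = s"
proof -
  obtain e where e: "is_unity S z mul e" and i: "\<forall>x\<in>S_alpha S z mul z. x \<noteq> z \<longrightarrow>
           (\<exists>y\<in>S_alpha S z mul z. mul x y = e \<and> mul y x = e)" using unity by blast
  have eu: "\<forall>s\<in>S. mul e s = s \<and> mul s e = s" using e unfolding is_unity_def by auto
  obtain t where t: "t \<in> S" "mul z t = e" "e \<in> S"
    using e unfolding is_unity_def Lambda_def S_alpha_def by auto
  have e0: "e \<in> S0" using S0I t(3) eu by simp
  define m where "m = add e one"
  have m0: "m \<in> S0" unfolding m_def using S0_add e0 one0 by simp
  have mS: "m \<in> S" using m0 S0D by auto
  have m1: "add m (neg one) = e" unfolding m_def using t(3) by simp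
  have e1S: "add e (neg one) \<in> S" using t(3) by simp
  have "mul m (mul e t) = add (mul (mul m e) t)
     (neg (mul (mul (add m (neg one)) (add e (neg one))) (mul z t)))"
    using sassoc[OF m0 e0 t(1)] .
  moreover have "mul e t = t" "mul m e = m" using eu t(1) mS by auto
  moreover have "mul e (add e (neg one)) = add e (neg one)" using eu e1S by auto
  moreover have "mul (add e (neg one)) e = add e (neg one)" using eu e1S by auto
  ultimately have "mul m t = add (mul m t) (neg (add e (neg one)))"
    using m1 t(2) by simp
  hence "add (neg (mul m t)) (mul m t) = add (neg (mul m t)) (add (mul m t) (neg (add e (neg one))))"
    by simp
  hence "neg (add e (neg one)) = z"
    using t mS e1S by simp
  hence "neg (neg (add e (neg one))) = z" using neg_uniq[of z z] by simp
  hence "add e (neg one) = z" using e1S by simp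
  hence "neg one = neg e" using neg_uniq t(3) by simp
  hence "neg (neg one) = neg (neg e)" by simp
  hence "e = one" using t(3) by simp
  show "x \<in> S0 \<Longrightarrow> x \<noteq> z \<Longrightarrow> \<exists>y\<in>S0. mul x y = one \<and> mul y x = one"
  proof -
    assume "x \<in> S0" "x \<noteq> z"
    hence "\<exists>y\<in>S_alpha S z mul z. mul x y = e \<and> mul y x = e" using i unfolding S0_def by blast
    then obtain y where "y \<in> S_alpha S z mul z" "mul x y = e" "mul y x = e" by blast
    hence "y \<in> S0" "mul x y = one" "mul y x = one" using \<open>e = one\<close> unfolding S0_def by simp_all
    thus ?thesis by blast
  qed
  show "s \<in> S \<Longrightarrow> mul one s = s \<and> mul s one = s"
  proof -
    assume "s \<in> S"
    hence "mul e s = s \<and> mul s e = s" using eu by blast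
    thus ?thesis using \<open>e = one\<close> by blast
  qed
qed

lemma q01: "q01 \<in> S" "mul z q01 = one"
  using ess unfolding essential_def standard_bases_def S_alpha_def by auto

lemma sub1: "a \<in> S0 \<Longrightarrow> add a (neg one) \<in> S0" using S0_add S0_neg one0 by auto

lemma lam: "a \<in> S0 \<Longrightarrow> a \<in> Lambda S z mul"
proof -
  assume a: "a \<in> S0"
  have aS: "a \<in> S" using a S0D by auto
  have x0: "add a (neg one) \<in> S0" using sub1 a by auto
  hence xS: "add a (neg one) \<in> S" using S0D by auto
  have "mul z (mul a q01) = add (mul (mul z a) q01)
     (neg (mul (mul (add z (neg one)) (add a (neg one))) (mul z q01)))"
    using sassoc[OF z0 a q01(1)] .
  also have "\<dots> = add one (neg (mul (neg one) (add a (neg one))))"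
  proof -
    have "mul z a = z" using a S0D by auto
    moreover have "mul z q01 = one" using q01 by auto
    moreover have "add z (neg one) = neg one" by simp
    moreover have "mul (mul (neg one) (add a (neg one))) one = mul (neg one) (add a (neg one))"
      using unit xS by simp
    ultimately show ?thesis using q01 unit by simp
  qed
  also have "mul (neg one) (add a (neg one)) = neg (add a (neg one))"
    using mcomm mneg[OF x0, of one] unit xS by auto
  finally have "mul z (mul a q01) = a" using aS by (simp add: lcomm)
  moreover have "mul (mul a q01) z = a" using calculation mcomm aS q01 by auto
  ultimately show ?thesis unfolding Lambda_def S_alpha_def using aS q01 by auto
qed

lemma cx1: "a \<in> S \<Longrightarrow> x \<in> S \<Longrightarrow> add a (add x (neg a)) = x"
  using lcomm[of a x "neg a"] by simp
lemma cx2: "a \<in> S \<Longrightarrow> x \<in> S \<Longrightarrow> add (neg a) (add x a) = x"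
  using lcomm[of "neg a" x a] by simp
lemma cx3: "a \<in> S \<Longrightarrow> x \<in> S \<Longrightarrow> y \<in> S \<Longrightarrow> add a (add x (add (neg a) y)) = add x y"
  by (metis lcomm negS canc1 cl)
lemma cx4: "a \<in> S \<Longrightarrow> x \<in> S \<Longrightarrow> y \<in> S \<Longrightarrow> add (neg a) (add x (add a y)) = add x y"
  using lcomm[of "neg a" x "add a y"] by simp

lemma grp_id: "q \<in> S \<Longrightarrow> a \<in> S \<Longrightarrow> b \<in> S \<Longrightarrow>
  add (add (add (add q (add (add (neg one) a) (add b (neg one)))) one) (neg b)) one = add q a"
proof -
  assume q: "q \<in> S" and a: "a \<in> S" and b: "b \<in> S"
  define Y where "Y = add (neg one) a"
  have Y: "Y \<in> S" using a Y_def by simp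
  have t1: "add (add b (neg one)) one = b" using assoc[of b "neg one" one] b by simp
  have t2: "add (add Y (add b (neg one))) one = add Y b"
    using assoc[of Y "add b (neg one)" one] Y b t1 by simp
  have t3: "add (add (add q (add Y (add b (neg one)))) one) (neg b) = add q Y"
    using assoc[of q "add Y (add b (neg one))" one] assoc[of q "add Y b" "neg b"] t2 q Y b by simp
  have t4: "add Y one = a" unfolding Y_def
    using comm[of "neg one" a] assoc[of a "neg one" one] a by simp
  have "add (add q Y) one = add q a" using assoc[of q Y one] q Y t4 by simp
  thus ?thesis using t3 unfolding Y_def by simp
qed

lemma rev_id:
  assumes a0: "a \<in> S0" and b0: "b \<in> S0" and ab: "mul a b = one" and ba: "mul b a = one"
  shows "q01 = ssub add neg (mul b (add (q0 add neg mul one q01 a) a)) a"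
proof -
  have aS: "a \<in> S" and bS: "b \<in> S" using a0 b0 S0D by auto
  have qS: "q01 \<in> S" using q01 by auto
  have x0: "add a (neg one) \<in> S0" and y0: "add b (neg one) \<in> S0" using sub1 a0 b0 by auto
  have xS: "add a (neg one) \<in> S" and yS: "add b (neg one) \<in> S" using x0 y0 S0D by auto
  have h1: "mul a (add q01 one) = add (mul a q01) a" using madd[OF a0 qS oneS] unit aS by simp
  have q0a: "q0 add neg mul one q01 a = add (add (mul a q01) a) (neg one)"
    unfolding q0_def ssub_def h1 ..
  have P: "mul (add b (neg one)) (add a (neg one)) = add (add one (neg a)) (add (neg b) one)"
  proof -
    have "mul (add b (neg one)) (add a (neg one))
        = add (mul (add b (neg one)) a) (mul (add b (neg one)) (neg one))"
      using madd[OF y0 aS] by simp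
    also have "mul (add b (neg one)) a = add one (neg a)"
      using mcomm[OF yS aS] madd[OF a0 bS] mneg[OF a0 oneS] ab unit aS by simp
    also have "mul (add b (neg one)) (neg one) = add (neg b) one"
      using mneg[OF y0 oneS] unit yS neg_add bS by simp
    finally show ?thesis .
  qed
  have M: "mul b (mul a q01) = add q01 (neg (add (add one (neg a)) (add (neg b) one)))"
    using sassoc[OF b0 a0 qS] ba q01 unit P xS yS aS bS by simp
  have "mul b (add (q0 add neg mul one q01 a) a)
     = add (add (add (mul b (mul a q01)) one) (neg b)) one"
    unfolding q0a using madd[OF b0] mneg[OF b0] ba unit aS bS qS by simp
  also have "\<dots> = add q01 a"
    unfolding M using grp_id[OF qS aS bS] neg_add neg_neg aS bS by simp
  finally show ?thesis unfolding ssub_def using qS aS by simp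
qed

end


theorem theorem4p2p3:
  fixes S :: "'a set" and add mul :: "'a \<Rightarrow> 'a \<Rightarrow> 'a" and neg :: "'a \<Rightarrow> 'a"
    and z one q01 :: 'a
  assumes "S_field S add neg z mul one q01"
  shows "(\<forall>\<alpha>\<in>S_alpha S z mul z. \<alpha> \<noteq> z \<longrightarrow>
            reversible S add neg z mul one q01 \<alpha> \<and>
            (\<exists>!x. x = div_zero add neg mul one q01 \<alpha>))
       \<and> (\<forall>\<alpha>\<in>S_alpha S z mul z. \<forall>\<beta>\<in>S_alpha S z mul z.
            \<alpha> \<noteq> z \<longrightarrow> \<beta> \<noteq> z \<longrightarrow> \<alpha> \<noteq> \<beta> \<longrightarrow>
            div_zero add neg mul one q01 \<alpha> \<noteq> div_zero add neg mul one q01 \<beta>)"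
proof -
  interpret sfl S add mul neg z one q01 using assms by (unfold_locales)
  have sb: "\<forall>\<alpha>\<in>Lambda S z mul. q0 add neg mul one q01 \<alpha> \<in> S_alpha S z mul \<alpha>"
    using ess unfolding essential_def standard_bases_def by auto
  have A: "reversible S add neg z mul one q01 a" if a: "a \<in> S0" "a \<noteq> z" for a
  proof -
    obtain b where b: "b \<in> S0" "mul a b = one" "mul b a = one" using inv_ex a by blast
    show ?thesis unfolding reversible_def
      using lam[OF a(1)] lam[OF b(1)] rev_id[OF a(1) b] by blast
  qed
  have B: "div_zero add neg mul one q01 a \<noteq> div_zero add neg mul one q01 b"
    if "a \<in> S0" "b \<in> S0" "a \<noteq> b" for a b
  proof
    assume "div_zero add neg mul one q01 a = div_zero add neg mul one q01 b"
    hence "q0 add neg mul one q01 a = q0 add neg mul one q01 b" unfolding div_zero_def .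
    moreover have "q0 add neg mul one q01 a \<in> S_alpha S z mul a"
      "q0 add neg mul one q01 b \<in> S_alpha S z mul b" using sb lam[OF that(1)] lam[OF that(2)] by blast+
    ultimately have "mul z (q0 add neg mul one q01 a) = a" "mul z (q0 add neg mul one q01 a) = b"
      unfolding S_alpha_def by auto
    thus False using that(3) by simp
  qed
  have E: "\<exists>!x. x = div_zero add neg mul one q01 a" for a by simp
  show ?thesis
  proof (intro conjI ballI impI)
    fix a assume "a \<in> S_alpha S z mul z" "a \<noteq> z"
    thus "reversible S add neg z mul one q01 a" by (intro A) (simp_all add: S0_def)
  next
    fix a show "\<exists>!x. x = div_zero add neg mul one q01 a" by (rule E)
  next
    fix a b assume "a \<in> S_alpha S z mul z" "b \<in> S_alpha S z mul z" "a \<noteq> b"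
    thus "div_zero add neg mul one q01 a \<noteq> div_zero add neg mul one q01 b"
      by (intro B) (simp_all add: S0_def)
  qed
qed

end
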